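(* Let $r\in\mathfrak{b}$ have pairwise distinct diagonal entries and let $b_{11},\dots,b_{nn}\in\mathbb{C}^*$. Then $b=\sum_{\iota=1}^nE_{\iota\iota}\operatorname{diag}(b_{11},\dots,b_{nn})L^\iota(r)$ is an invertible upper triangular matrix with diagonal entries $b_{11},\dots,b_{nn}$, and $brb^{-1}=\operatorname{diag}(r_{11},\dots,r_{nn})$. Explicitly, $b_{\iota\gamma}=0$ for $\iota>\gamma$ and for $\iota<\gamma$ $$b_{\iota\gamma}=b_{\iota\iota}\Big(\frac{r_{\iota\gamma}}{r_{\iota\iota}-r_{\gamma\gamma}}+\sum_{v=1}^{\gamma-\iota-1}\sum_{\iota<k_1<\dots<k_v<\gamma}\frac{r_{\iota k_1}r_{k_v\gamma}}{(r_{\iota\iota}-r_{k_1k_1})(r_{\iota\iota}-r_{\gamma\gamma})}\prod_{u=1}^{v-1}\frac{r_{k_uk_{u+1}}}{r_{\iota\iota}-r_{k_{u+1}k_{u+1}}}\Big).$$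
   Context: $\mathfrak{b}$ is the space of upper triangular complex $n\times n$ matrices; $E_{\iota\iota}$ is the matrix unit with $1$ in position $(\iota,\iota)$. $L^\iota(r)=\big[\operatorname{tr}\prod_{k\ne\iota}(r-r_{kk}I)\big]^{-1}\prod_{k\ne\iota}(r-r_{kk}I)$. Empty sums are $0$ and empty products are $1$. *)

theory Defs
  imports "Jordan_Normal_Form.Matrix"
begin

text \<open>Matrices are Jordan_Normal_Form matrices; indices are 0-based (0..n-1).\<close>

definition mat_trace :: "'a::comm_ring_1 mat \<Rightarrow> 'a" where
  "mat_trace A = (\<Sum>i<dim_row A. A $$ (i,i))"

definition mat_unit :: "nat \<Rightarrow> nat \<Rightarrow> nat \<Rightarrow> 'a::{zero,one} mat" where
  "mat_unit n i j = mat n n (\<lambda>(a,b). if a = i \<and> b = j then 1 else 0)"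

definition mat_sum_list :: "nat \<Rightarrow> (nat \<Rightarrow> 'a::comm_ring_1 mat) \<Rightarrow> nat list \<Rightarrow> 'a mat" where
  "mat_sum_list n f xs = foldr (\<lambda>i A. f i + A) xs (0\<^sub>m n n)"

definition mat_prod_list :: "nat \<Rightarrow> (nat \<Rightarrow> 'a::comm_ring_1 mat) \<Rightarrow> nat list \<Rightarrow> 'a mat" where
  "mat_prod_list n f xs = foldr (\<lambda>i A. f i * A) xs (1\<^sub>m n)"

definition Lprod :: "nat \<Rightarrow> 'a::comm_ring_1 mat \<Rightarrow> 'a mat" where
  "Lprod \<iota> r = mat_prod_list (dim_row r)
      (\<lambda>k. r - r $$ (k,k) \<cdot>\<^sub>m 1\<^sub>m (dim_row r)) (filter (\<lambda>k. k \<noteq> \<iota>) [0..<dim_row r])"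

definition Lmat :: "nat \<Rightarrow> 'a::field mat \<Rightarrow> 'a mat" where
  "Lmat \<iota> r = inverse (mat_trace (Lprod \<iota> r)) \<cdot>\<^sub>m Lprod \<iota> r"

end

theory Submission
  imports Defs "Jordan_Normal_Form.Determinant"
begin


definition MM :: "'a::comm_ring_1 mat \<Rightarrow> nat \<Rightarrow> 'a mat" where
  "MM r k = r - r $$ (k,k) \<cdot>\<^sub>m 1\<^sub>m (dim_row r)"

lemma MM_carrier[simp]: "r \<in> carrier_mat n n \<Longrightarrow> MM r k \<in> carrier_mat n n"
  unfolding MM_def by auto

lemma MM_dims: "r \<in> carrier_mat n n \<Longrightarrow> dim_row (MM r k) = n"  "r \<in> carrier_mat n n \<Longrightarrow> dim_col (MM r k) = n"
  using MM_carrier by blast+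

lemma MM_index: "r \<in> carrier_mat n n \<Longrightarrow> i < n \<Longrightarrow> j < n \<Longrightarrow>
   MM r k $$ (i,j) = r $$ (i,j) - (if i = j then r $$ (k,k) else 0)"
  unfolding MM_def by auto

lemma mult_index: "A \<in> carrier_mat n n \<Longrightarrow> B \<in> carrier_mat n n \<Longrightarrow> i < n \<Longrightarrow> j < n \<Longrightarrow>
  (A * B) $$ (i,j) = (\<Sum>k<n. A $$ (i,k) * B $$ (k,j))"
  by (simp add: scalar_prod_def lessThan_atLeast0)

lemma MM_mult_index:
  assumes r: "r \<in> carrier_mat n n" and ij: "i < n" "j < n"
  shows "(MM r a * MM r b) $$ (i,j) = (\<Sum>k<n. r $$ (i,k) * r $$ (k,j))
     - r $$ (b,b) * r $$ (i,j) - r $$ (a,a) * r $$ (i,j) + (if i = j then r $$ (a,a) * r $$ (b,b) else 0)"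
proof -
  have "(MM r a * MM r b) $$ (i,j) = (\<Sum>k<n. (r $$ (i,k) - (if i = k then r $$ (a,a) else 0)) *
      (r $$ (k,j) - (if k = j then r $$ (b,b) else 0)))"
    using r ij by (simp add: mult_index[OF MM_carrier[OF r] MM_carrier[OF r]] MM_index)
  also have "\<dots> = (\<Sum>k<n. r $$ (i,k) * r $$ (k,j) - (if k = j then r $$ (b,b) * r $$ (i,k) else 0)
     - (if i = k then r $$ (a,a) * r $$ (k,j) else 0) + (if k = j then (if i = j then r $$ (a,a) * r $$ (b,b) else 0) else 0))"
    by (rule sum.cong, auto simp: algebra_simps)
  also have "\<dots> = (\<Sum>k<n. r $$ (i,k) * r $$ (k,j)) - (\<Sum>k<n. if k = j then r $$ (b,b) * r $$ (i,k) else 0)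
     - (\<Sum>k<n. if i = k then r $$ (a,a) * r $$ (k,j) else 0) + (\<Sum>k<n. if k = j then (if i = j then r $$ (a,a) * r $$ (b,b) else 0) else 0)"
    by (simp only: sum.distrib sum_subtractf)
  also have "\<dots> = (\<Sum>k<n. r $$ (i,k) * r $$ (k,j))
     - r $$ (b,b) * r $$ (i,j) - r $$ (a,a) * r $$ (i,j) + (if i = j then r $$ (a,a) * r $$ (b,b) else 0)"
    using ij by (simp add: sum.delta sum.delta')
  finally show ?thesis .
qed

lemma MM_comm: assumes r: "r \<in> carrier_mat n n"
  shows "MM r a * MM r b = MM r b * MM r a"
proof -
  have c: "MM r a * MM r b \<in> carrier_mat n n" "MM r b * MM r a \<in> carrier_mat n n"
    using mult_carrier_mat[OF MM_carrier[OF r] MM_carrier[OF r]] by auto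
  show ?thesis
  proof (rule eq_matI)
    fix i j assume "i < dim_row (MM r b * MM r a)" "j < dim_col (MM r b * MM r a)"
    then have ij: "i < n" "j < n" using c by auto
    show "(MM r a * MM r b) $$ (i, j) = (MM r b * MM r a) $$ (i, j)"
      unfolding MM_mult_index[OF r ij] by (simp add: algebra_simps)
  qed (use c MM_dims[OF r] in auto)
qed

lemma mpl_Nil[simp]: "mat_prod_list n f [] = 1\<^sub>m n"
  by (simp add: mat_prod_list_def)
lemma mpl_Cons[simp]: "mat_prod_list n f (x # xs) = f x * mat_prod_list n f xs"
  by (simp add: mat_prod_list_def)

lemma prod_list_carrier: assumes f: "\<And>k. f k \<in> carrier_mat n n" shows "mat_prod_list n f xs \<in> carrier_mat n n"
proof (induction xs)
  case (Cons x xs) then show ?case using mult_carrier_mat[OF f[of x] Cons] by simp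
qed simp

lemma prod_list_append: assumes f: "\<And>k. f k \<in> carrier_mat n n"
  shows "mat_prod_list n f (xs @ ys) = mat_prod_list n f xs * mat_prod_list n f ys"
proof (induction xs)
  case Nil
  have "1\<^sub>m n * mat_prod_list n f ys = mat_prod_list n f ys"
    by (rule left_mult_one_mat[OF prod_list_carrier[where f=f, OF f]])
  then show ?case by simp
next
  case (Cons x xs)
  have "mat_prod_list n f ((x # xs) @ ys) = f x * mat_prod_list n f (xs @ ys)"
    by simp
  also have "\<dots> = f x * (mat_prod_list n f xs * mat_prod_list n f ys)" using Cons by simp
  also have "\<dots> = (f x * mat_prod_list n f xs) * mat_prod_list n f ys"
    using assoc_mult_mat[OF f[of x] prod_list_carrier[where f=f, OF f] prod_list_carrier[where f=f, OF f]] by simp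
  finally show ?case by simp
qed

lemma prod_list_comm: assumes f: "\<And>k. f k \<in> carrier_mat n n" and A: "A \<in> carrier_mat n n"
  and c: "\<And>k. A * f k = f k * A"
  shows "A * mat_prod_list n f xs = mat_prod_list n f xs * A"
proof (induction xs)
  case Nil
  then show ?case using A by simp
next
  case (Cons x xs)
  have P: "mat_prod_list n f xs \<in> carrier_mat n n" by (rule prod_list_carrier[where f=f, OF f])
  have "A * mat_prod_list n f (x # xs) = A * (f x * mat_prod_list n f xs)"
    by simp
  also have "\<dots> = (A * f x) * mat_prod_list n f xs" using assoc_mult_mat[OF A f[of x] P] by simp
  also have "\<dots> = (f x * A) * mat_prod_list n f xs" by (simp only: c)
  also have "\<dots> = f x * (A * mat_prod_list n f xs)" using assoc_mult_mat[OF f[of x] A P] by simp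
  also have "\<dots> = f x * (mat_prod_list n f xs * A)" using Cons by simp
  also have "\<dots> = (f x * mat_prod_list n f xs) * A" using assoc_mult_mat[OF f[of x] P A] by simp
  finally show ?case by simp
qed

lemma upper_mult: assumes A: "A \<in> carrier_mat n n" and B: "B \<in> carrier_mat n n"
  and uA: "upper_triangular A" and uB: "upper_triangular B"
  shows "upper_triangular (A * B)" "\<And>j. j < n \<Longrightarrow> (A * B) $$ (j,j) = A $$ (j,j) * B $$ (j,j)"
proof -
  show "upper_triangular (A * B)"
  proof (rule upper_triangularI)
    fix i j assume "j < i" "i < dim_row (A * B)"
    then have ij: "j < i" "i < n" using A by auto
    have "(A * B) $$ (i,j) = (\<Sum>k<n. A $$ (i,k) * B $$ (k,j))"
      using ij mult_index[OF A B] by auto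
    also have "\<dots> = 0"
    proof (rule sum.neutral, intro ballI)
      fix k assume k: "k \<in> {..<n}"
      show "A $$ (i,k) * B $$ (k,j) = 0"
      proof (cases "k < i")
        case True then show ?thesis using uA A ij by (auto simp: upper_triangular_def)
      next
        case False then show ?thesis using uB B ij k by (auto simp: upper_triangular_def)
      qed
    qed
    finally show "(A * B) $$ (i,j) = 0" .
  qed
  fix j assume j: "j < n"
  have "(A * B) $$ (j,j) = (\<Sum>k<n. A $$ (j,k) * B $$ (k,j))"
    using j mult_index[OF A B] by auto
  also have "\<dots> = A $$ (j,j) * B $$ (j,j) + (\<Sum>k\<in>{..<n}-{j}. A $$ (j,k) * B $$ (k,j))"
    using j by (simp add: sum.remove)
  also have "(\<Sum>k\<in>{..<n}-{j}. A $$ (j,k) * B $$ (k,j)) = 0"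
  proof (rule sum.neutral, intro ballI)
    fix k assume k: "k \<in> {..<n}-{j}"
    show "A $$ (j,k) * B $$ (k,j) = 0"
    proof (cases "k < j")
      case True then show ?thesis using uA A j by (auto simp: upper_triangular_def)
    next
      case False then show ?thesis using uB B j k by (auto simp: upper_triangular_def)
    qed
  qed
  finally show "(A * B) $$ (j,j) = A $$ (j,j) * B $$ (j,j)" by simp
qed

lemma prod_list_upper: assumes f: "\<And>k. f k \<in> carrier_mat n n" and u: "\<And>k. upper_triangular (f k)"
  shows "upper_triangular (mat_prod_list n f xs) \<and>
     (\<forall>j<n. mat_prod_list n f xs $$ (j,j) = (\<Prod>k\<leftarrow>xs. f k $$ (j,j)))"
proof (induction xs)
  case Nil
  then show ?case by simp
next
  case (Cons x xs)
  have P: "mat_prod_list n f xs \<in> carrier_mat n n" by (rule prod_list_carrier[where f=f, OF f])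
  show ?case using upper_mult[OF f[of x] P u[of x]] Cons by auto
qed

lemma MM_upper: "r \<in> carrier_mat n n \<Longrightarrow> upper_triangular r \<Longrightarrow> upper_triangular (MM r k)"
  by (rule upper_triangularI) (auto simp: MM_index MM_dims upper_triangular_def)

lemma MM_diag: "r \<in> carrier_mat n n \<Longrightarrow> j < n \<Longrightarrow> MM r k $$ (j,j) = r $$ (j,j) - r $$ (k,k)"
  by (simp add: MM_index)

lemma prod_zero_cols:
  assumes r: "r \<in> carrier_mat n n" and u: "upper_triangular r"
  shows "m \<le> n \<Longrightarrow> a < n \<Longrightarrow> c < m \<Longrightarrow> mat_prod_list n (MM r) [0..<m] $$ (a,c) = 0"
proof (induction m arbitrary: a c)
  case 0 then show ?case by simp
next
  case (Suc m)
  have f: "\<And>k. MM r k \<in> carrier_mat n n" using r by simp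
  have Q: "mat_prod_list n (MM r) [0..<m] \<in> carrier_mat n n" by (rule prod_list_carrier[where f="MM r", OF f])
  have e: "mat_prod_list n (MM r) [0..<Suc m] = mat_prod_list n (MM r) [0..<m] * MM r m"
    using prod_list_append[where f="MM r", OF f, of "[0..<m]" "[m]"] right_mult_one_mat[OF f[of m]] by simp
  have "mat_prod_list n (MM r) [0..<Suc m] $$ (a,c) = (\<Sum>l<n. mat_prod_list n (MM r) [0..<m] $$ (a,l) * MM r m $$ (l,c))"
    unfolding e using Suc.prems mult_index[OF Q f[of m]] by auto
  also have "\<dots> = 0"
  proof (rule sum.neutral, intro ballI)
    fix l assume l: "l \<in> {..<n}"
    show "mat_prod_list n (MM r) [0..<m] $$ (a,l) * MM r m $$ (l,c) = 0"
    proof (cases "l < m")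
      case True then show ?thesis using Suc l by auto
    next
      case False
      show ?thesis
      proof (cases "c < l")
        case True then have "MM r m $$ (l,c) = 0" using MM_upper[OF r u, of m] MM_dims[OF r, of m] l
          by (auto simp: upper_triangular_def)
        then show ?thesis by simp
      next
        case False2: False
        then have "l = m" "c = m" using False Suc.prems by auto
        then show ?thesis using MM_diag[OF r] Suc.prems by simp
      qed
    qed
  qed
  finally show ?case .
qed

lemma upt_split3: "i < n \<Longrightarrow> [0..<i] @ [i] @ [Suc i..<n] = [0..<(n::nat)]"
  using upt_add_eq_append[of 0 i "n-i"] upt_conv_Cons[of i n] by simp

lemma filter_upt_split: "i < n \<Longrightarrow> filter (\<lambda>k. k \<noteq> i) [0..<n] = [0..<i] @ [Suc i..<n]"
proof -
  assume i: "i < n"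
  have "filter (\<lambda>k. k \<noteq> i) ([0..<i] @ [i] @ [Suc i..<n]) = [0..<i] @ [Suc i..<n]"
    by (simp add: filter_id_conv)
  then show ?thesis unfolding upt_split3[OF i] .
qed

lemma Lprod_MM: "r \<in> carrier_mat n n \<Longrightarrow> Lprod i r = mat_prod_list n (MM r) (filter (\<lambda>k. k \<noteq> i) [0..<n])"
  unfolding Lprod_def MM_def[abs_def] by simp

lemma Lprod_zero:
  assumes r: "r \<in> carrier_mat n n" and u: "upper_triangular r" and i: "i < n"
  shows "Lprod i r * MM r i = 0\<^sub>m n n"
proof -
  have f: "\<And>k. MM r k \<in> carrier_mat n n" using r by simp
  define A where "A = mat_prod_list n (MM r) [0..<i]"
  define B where "B = mat_prod_list n (MM r) [Suc i..<n]"
  have A: "A \<in> carrier_mat n n" unfolding A_def by (rule prod_list_carrier[where f="MM r", OF f])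
  have B: "B \<in> carrier_mat n n" unfolding B_def by (rule prod_list_carrier[where f="MM r", OF f])
  have L: "Lprod i r = A * B" unfolding Lprod_MM[OF r] filter_upt_split[OF i] A_def B_def
    by (rule prod_list_append[where f="MM r", OF f])
  have cB: "MM r i * B = B * MM r i" unfolding B_def
    by (rule prod_list_comm[OF f f], rule MM_comm[OF r])
  have "Lprod i r * MM r i = A * (B * MM r i)" unfolding L using assoc_mult_mat[OF A B f[of i]] by simp
  also have "\<dots> = (A * MM r i) * B" unfolding cB[symmetric] using assoc_mult_mat[OF A f[of i] B] by simp
  also have "A * MM r i = mat_prod_list n (MM r) ([0..<i] @ [i])"
    unfolding A_def using prod_list_append[where f="MM r", OF f, of "[0..<i]" "[i]"] right_mult_one_mat[OF f[of i]] by simp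
  also have "mat_prod_list n (MM r) ([0..<i] @ [i]) * B = mat_prod_list n (MM r) (([0..<i] @ [i]) @ [Suc i..<n])"
    unfolding B_def by (rule prod_list_append[where f="MM r", OF f, symmetric])
  also have "([0..<i] @ [i]) @ [Suc i..<n] = [0..<n]"
    using upt_split3[OF i] by simp
  finally have e: "Lprod i r * MM r i = mat_prod_list n (MM r) [0..<n]" .
  have P: "mat_prod_list n (MM r) [0..<n] \<in> carrier_mat n n" by (rule prod_list_carrier[where f="MM r", OF f])
  show ?thesis unfolding e
  proof (rule eq_matI)
    fix a c assume "a < dim_row (0\<^sub>m n n :: 'a mat)" "c < dim_col (0\<^sub>m n n :: 'a mat)"
    then have ac: "a < n" "c < n" by auto
    show "mat_prod_list n (MM r) [0..<n] $$ (a, c) = 0\<^sub>m n n $$ (a, c)"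
      using prod_zero_cols[OF r u le_refl ac] ac by simp
  qed (use P in auto)
qed

lemma msl_carrier: assumes f: "\<And>k. f k \<in> carrier_mat n n"
  shows "mat_sum_list n f xs \<in> carrier_mat n n"
  by (induction xs) (auto simp: mat_sum_list_def f)

lemma msl_index: assumes f: "\<And>k. f k \<in> carrier_mat n n" and ac: "a < n" "c < n"
  shows "mat_sum_list n f xs $$ (a,c) = (\<Sum>i\<leftarrow>xs. f i $$ (a,c))"
proof (induction xs)
  case Nil then show ?case using ac by (simp add: mat_sum_list_def)
next
  case (Cons x xs)
  have "mat_sum_list n f (x # xs) = f x + mat_sum_list n f xs" by (simp add: mat_sum_list_def)
  then show ?case using Cons msl_carrier[where f=f, OF f, of xs] f[of x] ac by simp
qed

lemma Lprod_carrier: "r \<in> carrier_mat n n \<Longrightarrow> Lprod i r \<in> carrier_mat n n"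
  unfolding Lprod_MM by (rule prod_list_carrier) simp

lemma Lmat_carrier: "r \<in> carrier_mat n n \<Longrightarrow> Lmat i r \<in> carrier_mat n n"
  unfolding Lmat_def by (rule smult_carrier_mat, rule Lprod_carrier)

lemma unit_diag_entry: fixes L :: "'a::comm_ring_1 mat" assumes L: "L \<in> carrier_mat n n" and ac: "a < n" "c < n"
  shows "(mat_unit n i i * mat_diag n d * L) $$ (a,c) = (if a = i then d i * L $$ (a,c) else 0)"
proof -
  have U: "mat_unit n i i = mat_diag n (\<lambda>k. if k = i then 1 else 0)"
    by (rule eq_matI) (auto simp: mat_unit_def mat_diag_def)
  have "mat_unit n i i * mat_diag n d = mat_diag n (\<lambda>k. (if k = i then 1 else 0) * d k)"
    unfolding U by (rule mat_diag_diag)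
  then have "mat_unit n i i * mat_diag n d * L = mat n n (\<lambda>(a,c). ((if a = i then 1 else 0) * d a) * L $$ (a,c))"
    using mat_diag_mult_left[OF L] by simp
  then show ?thesis using ac by simp
qed

lemma Lprod_facts:
  fixes r :: "'a::field mat"
  assumes r: "r \<in> carrier_mat n n" and u: "upper_triangular r"
    and dist: "\<forall>i<n. \<forall>j<n. i \<noteq> j \<longrightarrow> r $$ (i,i) \<noteq> r $$ (j,j)"
    and i: "i < n"
  shows "Lprod i r \<in> carrier_mat n n" "upper_triangular (Lprod i r)"
    "\<And>j. j < n \<Longrightarrow> j \<noteq> i \<Longrightarrow> Lprod i r $$ (j,j) = 0"
    "Lprod i r $$ (i,i) \<noteq> 0"
    "mat_trace (Lprod i r) = Lprod i r $$ (i,i)"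
    "\<And>c. c < n \<Longrightarrow> (\<Sum>j<n. Lprod i r $$ (i,j) * r $$ (j,c)) = r $$ (i,i) * Lprod i r $$ (i,c)"
proof -
  have f: "\<And>k. MM r k \<in> carrier_mat n n" using r by simp
  note LP = Lprod_MM[OF r, of i]
  show P: "Lprod i r \<in> carrier_mat n n" by (rule Lprod_carrier[OF r])
  have U: "upper_triangular (Lprod i r) \<and> (\<forall>j<n. Lprod i r $$ (j,j) = (\<Prod>k\<leftarrow>filter (\<lambda>k. k \<noteq> i) [0..<n]. MM r k $$ (j,j)))"
    unfolding LP by (rule prod_list_upper[OF f MM_upper[OF r u]])
  then show "upper_triangular (Lprod i r)" by simp
  have D: "Lprod i r $$ (j,j) = (\<Prod>k\<leftarrow>filter (\<lambda>k. k \<noteq> i) [0..<n]. r $$ (j,j) - r $$ (k,k))" if j: "j < n" for j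
  proof -
    have "Lprod i r $$ (j,j) = (\<Prod>k\<leftarrow>filter (\<lambda>k. k \<noteq> i) [0..<n]. MM r k $$ (j,j))" using U j by simp
    also have "\<dots> = (\<Prod>k\<leftarrow>filter (\<lambda>k. k \<noteq> i) [0..<n]. r $$ (j,j) - r $$ (k,k))"
      by (rule arg_cong[where f=prod_list], rule map_cong, simp, rule MM_diag[OF r j])
    finally show ?thesis .
  qed
  show Z: "Lprod i r $$ (j,j) = 0" if j: "j < n" "j \<noteq> i" for j
    unfolding D[OF j(1)] prod_list_zero_iff using j by force
  show NZ: "Lprod i r $$ (i,i) \<noteq> 0"
    unfolding D[OF i] prod_list_zero_iff using dist i by auto
  have "mat_trace (Lprod i r) = (\<Sum>j<n. Lprod i r $$ (j,j))" unfolding mat_trace_def using P by simp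
  also have "\<dots> = Lprod i r $$ (i,i) + (\<Sum>j\<in>{..<n}-{i}. Lprod i r $$ (j,j))"
    using i by (simp add: sum.remove)
  also have "(\<Sum>j\<in>{..<n}-{i}. Lprod i r $$ (j,j)) = 0" by (rule sum.neutral) (auto intro: Z)
  finally show "mat_trace (Lprod i r) = Lprod i r $$ (i,i)" by simp
  fix c assume c: "c < n"
  have "0 = (Lprod i r * MM r i) $$ (i,c)" using Lprod_zero[OF r u i] i c by simp
  also have "\<dots> = (\<Sum>j<n. Lprod i r $$ (i,j) * MM r i $$ (j,c))" using mult_index[OF P f[of i] i c] .
  also have "\<dots> = (\<Sum>j<n. Lprod i r $$ (i,j) * r $$ (j,c) - (if j = c then r $$ (i,i) * Lprod i r $$ (i,c) else 0))"
    by (rule sum.cong) (auto simp: MM_index[OF r] c algebra_simps)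
  also have "\<dots> = (\<Sum>j<n. Lprod i r $$ (i,j) * r $$ (j,c)) - r $$ (i,i) * Lprod i r $$ (i,c)"
    using c by (simp add: sum_subtractf)
  finally show "(\<Sum>j<n. Lprod i r $$ (i,j) * r $$ (j,c)) = r $$ (i,i) * Lprod i r $$ (i,c)" by simp
qed

lemma mat_diag_dims[simp]: "dim_row (mat_diag n f) = n" "dim_col (mat_diag n f) = n"
  by (simp_all add: mat_diag_def)

lemma b_facts:
  fixes r :: "'a::field mat"
  assumes r: "r \<in> carrier_mat n n" and u: "upper_triangular r"
    and dist: "\<forall>i<n. \<forall>j<n. i \<noteq> j \<longrightarrow> r $$ (i,i) \<noteq> r $$ (j,j)"
    and b: "b = mat_sum_list n (\<lambda>\<iota>. mat_unit n \<iota> \<iota> * mat_diag n d * Lmat \<iota> r) [0..<n]"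
  shows "b \<in> carrier_mat n n" "upper_triangular b" "\<And>i. i < n \<Longrightarrow> b $$ (i,i) = d i"
    "b * r = mat_diag n (\<lambda>i. r $$ (i,i)) * b"
proof -
  have fc: "\<And>k. mat_unit n k k * mat_diag n d * Lmat k r \<in> carrier_mat n n"
  proof -
    fix k
    have U: "mat_unit n k k \<in> carrier_mat n n" by (simp add: mat_unit_def)
    show "mat_unit n k k * mat_diag n d * Lmat k r \<in> carrier_mat n n"
      by (rule mult_carrier_mat[OF mult_carrier_mat[OF U mat_diag_dim] Lmat_carrier[OF r]])
  qed
  show B: "b \<in> carrier_mat n n" unfolding b by (rule msl_carrier[OF fc])
  have E: "b $$ (a,c) = d a * (Lprod a r $$ (a,c) / Lprod a r $$ (a,a))" if ac: "a < n" "c < n" for a c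
  proof -
    have "b $$ (a,c) = (\<Sum>i\<leftarrow>[0..<n]. (mat_unit n i i * mat_diag n d * Lmat i r) $$ (a,c))"
      unfolding b by (rule msl_index[OF fc ac])
    also have "\<dots> = (\<Sum>i\<leftarrow>[0..<n]. if a = i then d i * Lmat i r $$ (a,c) else 0)"
      by (rule arg_cong[where f=sum_list], rule map_cong, simp, rule unit_diag_entry[OF Lmat_carrier[OF r] ac])
    also have "\<dots> = (\<Sum>i\<in>{0..<n}. if a = i then d i * Lmat i r $$ (a,c) else 0)"
      by (simp add: interv_sum_list_conv_sum_set_nat)
    also have "\<dots> = d a * Lmat a r $$ (a,c)" using ac by simp
    also have "Lmat a r $$ (a,c) = inverse (mat_trace (Lprod a r)) * Lprod a r $$ (a,c)"
      unfolding Lmat_def using Lprod_carrier[OF r, of a] ac by (simp add: index_smult_mat)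
    also have "\<dots> = Lprod a r $$ (a,c) / Lprod a r $$ (a,a)"
      unfolding Lprod_facts(5)[OF r u dist ac(1)] by (simp add: field_simps)
    finally show ?thesis .
  qed
  show "upper_triangular b"
  proof (rule upper_triangularI)
    fix i j assume "j < i" "i < dim_row b"
    then have ij: "j < i" "i < n" "j < n" using B by auto
    have "Lprod i r $$ (i,j) = 0" using Lprod_facts(1,2)[OF r u dist ij(2)] ij by (auto simp: upper_triangular_def)
    then show "b $$ (i,j) = 0" using E[OF ij(2,3)] by simp
  qed
  show "\<And>i. i < n \<Longrightarrow> b $$ (i,i) = d i" using E Lprod_facts(4)[OF r u dist] by simp
  have D: "mat_diag n (\<lambda>i. r $$ (i,i)) * b = mat n n (\<lambda>(i,j). r $$ (i,i) * b $$ (i,j))"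
    by (rule mat_diag_mult_left[OF B])
  show "b * r = mat_diag n (\<lambda>i. r $$ (i,i)) * b"
  proof (rule eq_matI)
    fix a c assume "a < dim_row (mat_diag n (\<lambda>i. r $$ (i,i)) * b)" "c < dim_col (mat_diag n (\<lambda>i. r $$ (i,i)) * b)"
    then have ac: "a < n" "c < n" using B mat_diag_dim[of n "\<lambda>i. r $$ (i,i)"] by auto
    have "(b * r) $$ (a,c) = (\<Sum>j<n. b $$ (a,j) * r $$ (j,c))" using mult_index[OF B r ac] .
    also have "\<dots> = (\<Sum>j<n. d a / Lprod a r $$ (a,a) * (Lprod a r $$ (a,j) * r $$ (j,c)))"
      by (rule sum.cong, simp, subst E, use ac in auto)
    also have "\<dots> = d a / Lprod a r $$ (a,a) * (\<Sum>j<n. Lprod a r $$ (a,j) * r $$ (j,c))"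
      by (simp add: sum_distrib_left)
    also have "\<dots> = r $$ (a,a) * b $$ (a,c)"
      unfolding Lprod_facts(6)[OF r u dist ac] E[OF ac] by simp
    finally show "(b * r) $$ (a,c) = (mat_diag n (\<lambda>i. r $$ (i,i)) * b) $$ (a,c)"
      unfolding D using ac by simp
  qed (use B r mat_diag_dim[of n "\<lambda>i. r $$ (i,i)"] in auto)
qed




fun ep :: "(nat \<Rightarrow> nat \<Rightarrow> 'a::field) \<Rightarrow> nat \<Rightarrow> nat list \<Rightarrow> nat \<Rightarrow> 'a" where
  "ep e a [] c = e a c"
| "ep e a (k # ks) c = e a k * ep e k ks c"

lemma ep_snoc: "ep e a (ks @ [j]) c = ep e a ks j * e j c"
  by (induction ks arbitrary: a) auto

lemma ep_idx: "ks \<noteq> [] \<Longrightarrow>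
  e a (ks!0) * e (ks!(length ks - 1)) c * (\<Prod>u=1..length ks - 1. e (ks!(u-1)) (ks!u)) = ep e a ks c"
proof (induction ks arbitrary: a)
  case Nil then show ?case by simp
next
  case (Cons k ks)
  show ?case
  proof (cases "ks = []")
    case True then show ?thesis by simp
  next
    case False
    have IH: "e k (ks!0) * e (ks!(length ks - 1)) c * (\<Prod>u=1..length ks - 1. e (ks!(u-1)) (ks!u)) = ep e k ks c"
      using Cons.IH[OF False] .
    obtain m where m: "length ks = Suc m" using False by (cases ks) auto
    let ?F = "\<lambda>u. e ((k#ks)!(u-1)) ((k#ks)!u)"
    have "(\<Prod>u=1..length (k#ks) - 1. ?F u) = (\<Prod>u=1..Suc m. ?F u)" by (simp only: length_Cons diff_Suc_1 m)
    also have "\<dots> = ?F 1 * (\<Prod>u=Suc 1..Suc m. ?F u)"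
      by (rule prod.atLeast_Suc_atMost) simp
    also have "(\<Prod>u=Suc 1..Suc m. ?F u) = (\<Prod>u=1..m. ?F (Suc u))"
      by (rule prod.shift_bounds_cl_Suc_ivl)
    also have "\<dots> = (\<Prod>u=1..length ks - 1. e (ks!(u-1)) (ks!u))"
      unfolding m by (rule prod.cong) (auto simp: nth_Cons')
    also have "?F 1 = e k (ks!0)" by simp
    finally have P: "(\<Prod>u=1..length (k#ks) - 1. e ((k#ks)!(u-1)) ((k#ks)!u)) = e k (ks!0) * (\<Prod>u=1..length ks - 1. e (ks!(u-1)) (ks!u))" .
    have La: "(k#ks)!(length (k#ks) - 1) = ks!(length ks - 1)" using m by (simp add: nth_Cons')
    show ?thesis unfolding P La using IH[symmetric] by (simp add: mult_ac)
  qed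
qed

definition FF :: "(nat \<Rightarrow> nat \<Rightarrow> 'a::field) \<Rightarrow> nat \<Rightarrow> nat \<Rightarrow> 'a" where
  "FF e a c = (\<Sum>S\<in>Pow {a<..<c}. ep e a (sorted_list_of_set S) c)"

lemma sl_insert_max: assumes "finite S" "\<forall>x\<in>S. x < (j::nat)"
  shows "sorted_list_of_set (insert j S) = sorted_list_of_set S @ [j]"
proof -
  have jS: "j \<notin> S" using assms by auto
  have "sorted_wrt (<) (sorted_list_of_set S @ [j]) \<and> set (sorted_list_of_set S @ [j]) = insert j S
     \<and> length (sorted_list_of_set S @ [j]) = card (insert j S)"
    using assms jS by (auto simp: sorted_wrt_append)
  then show ?thesis using sorted_list_of_set_unique[of "insert j S" "sorted_list_of_set S @ [j]"] assms(1) by blast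
qed

lemma FF_nonempty: "FF e a c = e a c + (\<Sum>S\<in>Pow {a<..<c} - {{}}. ep e a (sorted_list_of_set S) c)"
  unfolding FF_def by (subst sum.remove[of _ "{}"]) auto

lemma FF_rec: "FF e a c = e a c + (\<Sum>j\<in>{a<..<c}. FF e a j * e j c)"
proof -
  have "(\<Sum>S\<in>Pow {a<..<c} - {{}}. ep e a (sorted_list_of_set S) c)
      = (\<Sum>p\<in>Sigma {a<..<c} (\<lambda>j. Pow {a<..<j}). ep e a (sorted_list_of_set (snd p)) (fst p) * e (fst p) c)"
  proof (rule sum.reindex_bij_witness[where i="\<lambda>p. insert (fst p) (snd p)" and j="\<lambda>S. (Max S, S - {Max S})"])
    fix S assume S: "S \<in> Pow {a<..<c} - {{}}"
    then have fin: "finite S" "S \<noteq> {}" by (auto intro: finite_subset)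
    show "insert (fst (Max S, S - {Max S})) (snd (Max S, S - {Max S})) = S"
      using fin Max_in by auto
    show "(Max S, S - {Max S}) \<in> Sigma {a<..<c} (\<lambda>j. Pow {a<..<j})"
      using S fin Max_in[OF fin] Max_ge[OF fin(1)] by fastforce
    have "S = insert (Max S) (S - {Max S})" using fin Max_in by auto
    then have "sorted_list_of_set S = sorted_list_of_set (S - {Max S}) @ [Max S]"
      using sl_insert_max[of "S - {Max S}" "Max S"] fin Max_ge[OF fin(1)] by (metis DiffE finite_Diff insertI1 le_neq_implies_less singletonI)
    then show "ep e a (sorted_list_of_set (snd (Max S, S - {Max S}))) (fst (Max S, S - {Max S})) * e (fst (Max S, S - {Max S})) c
         = ep e a (sorted_list_of_set S) c"
      by (simp add: ep_snoc)
  next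
    fix p assume p: "p \<in> Sigma {a<..<c} (\<lambda>j. Pow {a<..<j})"
    obtain j T where pj: "p = (j, T)" by (cases p)
    have jT: "j \<in> {a<..<c}" "T \<subseteq> {a<..<j}" using p pj by auto
    have fT: "finite T" using jT finite_subset by blast
    have MT: "Max (insert j T) = j" using jT fT by (auto intro!: Max_eqI)
    show "(Max (insert (fst p) (snd p)), insert (fst p) (snd p) - {Max (insert (fst p) (snd p))}) = p"
      using pj MT jT by auto
    show "insert (fst p) (snd p) \<in> Pow {a<..<c} - {{}}" using pj jT by auto
  qed
  also have "\<dots> = (\<Sum>j\<in>{a<..<c}. \<Sum>T\<in>Pow {a<..<j}. ep e a (sorted_list_of_set T) j * e j c)"
    by (subst sum.Sigma) (auto simp: split_beta)
  also have "\<dots> = (\<Sum>j\<in>{a<..<c}. FF e a j * e j c)"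
    unfolding FF_def by (simp add: sum_distrib_right)
  finally show ?thesis using FF_nonempty[of e a c] by simp
qed

lemma FF_card: "e a c + (\<Sum>v=1..c - a - 1. \<Sum>S\<in>{S. S \<subseteq> {a<..<c} \<and> card S = v}. g v S) = FF e a c"
  if g: "\<And>v S. v \<ge> 1 \<Longrightarrow> S \<subseteq> {a<..<c} \<Longrightarrow> card S = v \<Longrightarrow> g v S = ep e a (sorted_list_of_set S) c"
proof -
  have "(\<Sum>v=1..c - a - 1. \<Sum>S\<in>{S. S \<subseteq> {a<..<c} \<and> card S = v}. g v S)
      = (\<Sum>v=1..c - a - 1. \<Sum>S\<in>{S \<in> Pow {a<..<c} - {{}}. card S = v}. ep e a (sorted_list_of_set S) c)"
  proof (rule sum.cong[OF refl])
    fix v assume v: "v \<in> {1..c - a - 1}"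
    have "{S. S \<subseteq> {a<..<c} \<and> card S = v} = {S \<in> Pow {a<..<c} - {{}}. card S = v}" using v by auto
    then show "(\<Sum>S\<in>{S. S \<subseteq> {a<..<c} \<and> card S = v}. g v S) = (\<Sum>S\<in>{S \<in> Pow {a<..<c} - {{}}. card S = v}. ep e a (sorted_list_of_set S) c)"
      using g v by (auto intro!: sum.cong)
  qed
  also have "\<dots> = (\<Sum>S\<in>Pow {a<..<c} - {{}}. ep e a (sorted_list_of_set S) c)"
  proof (rule sum.group)
    show "card ` (Pow {a<..<c} - {{}}) \<subseteq> {1..c - a - 1}"
    proof
      fix x assume "x \<in> card ` (Pow {a<..<c} - {{}})"
      then obtain S where S: "S \<subseteq> {a<..<c}" "S \<noteq> {}" "x = card S" by auto
      have "finite S" using S finite_subset by blast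
      then have "card S \<ge> 1" using S by (simp add: Suc_leI card_gt_0_iff)
      moreover have "card S \<le> card {a<..<c}" using S card_mono[of "{a<..<c}" S] by simp
      ultimately show "x \<in> {1..c - a - 1}" using S by simp
    qed
  qed auto
  finally show ?thesis using FF_nonempty[of e a c] by simp
qed

lemma FF_unique:
  assumes rec: "\<And>c. a < c \<Longrightarrow> c < n \<Longrightarrow> y c = e a c + (\<Sum>j\<in>{a<..<c}. y j * e j c)"
  shows "a < c \<Longrightarrow> c < n \<Longrightarrow> y c = FF e a c"
proof (induction c rule: less_induct)
  case (less c)
  have "y c = e a c + (\<Sum>j\<in>{a<..<c}. y j * e j c)" using rec less.prems by simp
  also have "(\<Sum>j\<in>{a<..<c}. y j * e j c) = (\<Sum>j\<in>{a<..<c}. FF e a j * e j c)"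
    using less by (intro sum.cong) auto
  also have "e a c + (\<Sum>j\<in>{a<..<c}. FF e a j * e j c) = FF e a c" by (rule FF_rec[symmetric])
  finally show ?case .
qed


lemma aux_div: fixes D d x X :: "'a::field" shows "D \<noteq> 0 \<Longrightarrow> d \<noteq> 0 \<Longrightarrow> (d*x + X)/D/d = x/D + X/(d*D)"
  by (simp add: field_simps)

theorem mainTheorem16:
  fixes n :: nat and r :: "complex mat" and d :: "nat \<Rightarrow> complex"
  assumes r_carrier: "r \<in> carrier_mat n n"
    and r_upper: "upper_triangular r"
    and r_distinct: "\<forall>i<n. \<forall>j<n. i \<noteq> j \<longrightarrow> r $$ (i,i) \<noteq> r $$ (j,j)"
    and d_nonzero: "\<forall>i<n. d i \<noteq> 0"
  defines "b \<equiv> mat_sum_list n (\<lambda>\<iota>. mat_unit n \<iota> \<iota> * mat_diag n d * Lmat \<iota> r) [0..<n]"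
  shows "b \<in> carrier_mat n n \<and> upper_triangular b \<and> invertible_mat b
     \<and> (\<forall>i<n. b $$ (i,i) = d i)
     \<and> (\<exists>binv \<in> carrier_mat n n. b * binv = 1\<^sub>m n \<and> binv * b = 1\<^sub>m n
          \<and> b * r * binv = mat_diag n (\<lambda>i. r $$ (i,i)))
     \<and> (\<forall>\<iota><n. \<forall>\<gamma><n. \<gamma> < \<iota> \<longrightarrow> b $$ (\<iota>,\<gamma>) = 0)
     \<and> (\<forall>\<iota><n. \<forall>\<gamma><n. \<iota> < \<gamma> \<longrightarrow>
          b $$ (\<iota>,\<gamma>) = d \<iota> *
            (r $$ (\<iota>,\<gamma>) / (r $$ (\<iota>,\<iota>) - r $$ (\<gamma>,\<gamma>))
             + (\<Sum>v = 1..\<gamma> - \<iota> - 1.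
                  \<Sum>S \<in> {S. S \<subseteq> {\<iota><..<\<gamma>} \<and> card S = v}.
                    (let ks = sorted_list_of_set S in
                      r $$ (\<iota>, ks ! 0) * r $$ (ks ! (v - 1), \<gamma>)
                        / ((r $$ (\<iota>,\<iota>) - r $$ (ks ! 0, ks ! 0)) * (r $$ (\<iota>,\<iota>) - r $$ (\<gamma>,\<gamma>)))
                      * (\<Prod>u = 1..v - 1. r $$ (ks ! (u - 1), ks ! u)
                            / (r $$ (\<iota>,\<iota>) - r $$ (ks ! u, ks ! u)))))))"
  proof -
  note r = r_carrier and u = r_upper and dist = r_distinct
  note BF = b_facts[OF r u dist b_def[THEN meta_eq_to_obj_eq]]
  have B: "b \<in> carrier_mat n n" by (rule BF(1))
  have ub: "upper_triangular b" by (rule BF(2))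
  have db: "\<And>i. i < n \<Longrightarrow> b $$ (i,i) = d i" by (rule BF(3))
  have br: "b * r = mat_diag n (\<lambda>i. r $$ (i,i)) * b" by (rule BF(4))
  have "det b = prod_list (diag_mat b)" by (rule det_upper_triangular[OF ub B])
  also have "\<dots> \<noteq> 0" unfolding prod_list_zero_iff diag_mat_def using B db d_nonzero by auto
  finally have det: "det b \<noteq> 0" .
  from det_non_zero_imp_unit[OF B det, of "()"]
  obtain binv where binv: "binv \<in> carrier_mat n n" "binv * b = 1\<^sub>m n" "b * binv = 1\<^sub>m n"
    unfolding Units_def ring_mat_def by auto
  have inv: "invertible_mat b" unfolding invertible_mat_def inverts_mat_def square_mat.simps
    using B binv by auto
  have conj: "b * r * binv = mat_diag n (\<lambda>i. r $$ (i,i))"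
  proof -
    have "b * r * binv = mat_diag n (\<lambda>i. r $$ (i,i)) * b * binv" by (simp add: br)
    also have "\<dots> = mat_diag n (\<lambda>i. r $$ (i,i)) * (b * binv)"
      by (rule assoc_mult_mat[OF mat_diag_dim B binv(1)])
    also have "\<dots> = mat_diag n (\<lambda>i. r $$ (i,i))" unfolding binv(3) by (rule right_mult_one_mat[OF mat_diag_dim])
    finally show ?thesis .
  qed
  have low: "\<forall>\<iota><n. \<forall>\<gamma><n. \<gamma> < \<iota> \<longrightarrow> b $$ (\<iota>,\<gamma>) = 0"
    using ub B by (auto simp: upper_triangular_def)
  have formula: "b $$ (\<iota>,\<gamma>) = d \<iota> *
            (r $$ (\<iota>,\<gamma>) / (r $$ (\<iota>,\<iota>) - r $$ (\<gamma>,\<gamma>))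
             + (\<Sum>v = 1..\<gamma> - \<iota> - 1.
                  \<Sum>S \<in> {S. S \<subseteq> {\<iota><..<\<gamma>} \<and> card S = v}.
                    (let ks = sorted_list_of_set S in
                      r $$ (\<iota>, ks ! 0) * r $$ (ks ! (v - 1), \<gamma>)
                        / ((r $$ (\<iota>,\<iota>) - r $$ (ks ! 0, ks ! 0)) * (r $$ (\<iota>,\<iota>) - r $$ (\<gamma>,\<gamma>)))
                      * (\<Prod>u = 1..v - 1. r $$ (ks ! (u - 1), ks ! u)
                            / (r $$ (\<iota>,\<iota>) - r $$ (ks ! u, ks ! u))))))"
    if io: "\<iota> < n" "\<gamma> < n" "\<iota> < \<gamma>" for \<iota> \<gamma>
  proof -
    define e where "e = (\<lambda>a c. r $$ (a,c) / (r $$ (\<iota>,\<iota>) - r $$ (c,c)))"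
    define y where "y = (\<lambda>j. b $$ (\<iota>,j) / d \<iota>)"
    have dn: "d \<iota> \<noteq> 0" using d_nonzero io by auto
    have rec: "y c = e \<iota> c + (\<Sum>j\<in>{\<iota><..<c}. y j * e j c)" if c: "\<iota> < c" "c < n" for c
    proof -
      have nz: "r $$ (\<iota>,\<iota>) - r $$ (c,c) \<noteq> 0" using dist c io by auto
      have "(\<Sum>j<n. b $$ (\<iota>,j) * r $$ (j,c)) = (b * r) $$ (\<iota>,c)"
        using mult_index[OF B r io(1) c(2)] by simp
      also have "\<dots> = r $$ (\<iota>,\<iota>) * b $$ (\<iota>,c)" unfolding br
        using mat_diag_mult_left[OF B, of "\<lambda>i. r $$ (i,i)"] io c by simp
      finally have E1: "(\<Sum>j<n. b $$ (\<iota>,j) * r $$ (j,c)) = r $$ (\<iota>,\<iota>) * b $$ (\<iota>,c)" .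
      have "(\<Sum>j<n. b $$ (\<iota>,j) * r $$ (j,c)) = (\<Sum>j\<in>{\<iota>..c}. b $$ (\<iota>,j) * r $$ (j,c))"
      proof (rule sum.mono_neutral_right)
        show "\<forall>j\<in>{..<n} - {\<iota>..c}. b $$ (\<iota>,j) * r $$ (j,c) = 0"
        proof
          fix j assume j: "j \<in> {..<n} - {\<iota>..c}"
          show "b $$ (\<iota>,j) * r $$ (j,c) = 0"
          proof (cases "j < \<iota>")
            case True then show ?thesis using ub B io by (auto simp: upper_triangular_def)
          next
            case False then have "c < j" using j by auto
            then show ?thesis using u r j c by (auto simp: upper_triangular_def)
          qed
        qed
      qed (use c in auto)
      also have "{\<iota>..c} = insert \<iota> (insert c {\<iota><..<c})" using c by auto
      also have "(\<Sum>j\<in>insert \<iota> (insert c {\<iota><..<c}). b $$ (\<iota>,j) * r $$ (j,c))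
          = b $$ (\<iota>,\<iota>) * r $$ (\<iota>,c) + (b $$ (\<iota>,c) * r $$ (c,c) + (\<Sum>j\<in>{\<iota><..<c}. b $$ (\<iota>,j) * r $$ (j,c)))"
        using c by simp
      finally have E2: "r $$ (\<iota>,\<iota>) * b $$ (\<iota>,c) = d \<iota> * r $$ (\<iota>,c) + b $$ (\<iota>,c) * r $$ (c,c) + (\<Sum>j\<in>{\<iota><..<c}. b $$ (\<iota>,j) * r $$ (j,c))"
        using E1 db[OF io(1)] by (simp add: algebra_simps)
      then have "b $$ (\<iota>,c) * (r $$ (\<iota>,\<iota>) - r $$ (c,c)) = d \<iota> * r $$ (\<iota>,c) + (\<Sum>j\<in>{\<iota><..<c}. b $$ (\<iota>,j) * r $$ (j,c))"
        by (simp add: algebra_simps)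
      then have "b $$ (\<iota>,c) = (d \<iota> * r $$ (\<iota>,c) + (\<Sum>j\<in>{\<iota><..<c}. b $$ (\<iota>,j) * r $$ (j,c))) / (r $$ (\<iota>,\<iota>) - r $$ (c,c))"
        using nz by (simp add: field_simps)
      then have "y c = (d \<iota> * r $$ (\<iota>,c) + (\<Sum>j\<in>{\<iota><..<c}. b $$ (\<iota>,j) * r $$ (j,c))) / (r $$ (\<iota>,\<iota>) - r $$ (c,c)) / d \<iota>"
        unfolding y_def by simp
      also have "\<dots> = r $$ (\<iota>,c) / (r $$ (\<iota>,\<iota>) - r $$ (c,c)) + (\<Sum>j\<in>{\<iota><..<c}. (b $$ (\<iota>,j) / d \<iota>) * (r $$ (j,c) / (r $$ (\<iota>,\<iota>) - r $$ (c,c))))"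
      proof -
        have "(d \<iota> * r $$ (\<iota>,c) + (\<Sum>j\<in>{\<iota><..<c}. b $$ (\<iota>,j) * r $$ (j,c))) / (r $$ (\<iota>,\<iota>) - r $$ (c,c)) / d \<iota>
            = r $$ (\<iota>,c) / (r $$ (\<iota>,\<iota>) - r $$ (c,c)) + (\<Sum>j\<in>{\<iota><..<c}. b $$ (\<iota>,j) * r $$ (j,c)) / (d \<iota> * (r $$ (\<iota>,\<iota>) - r $$ (c,c)))"
          using aux_div[OF nz dn] .
        also have "(\<Sum>j\<in>{\<iota><..<c}. b $$ (\<iota>,j) * r $$ (j,c)) / (d \<iota> * (r $$ (\<iota>,\<iota>) - r $$ (c,c)))
            = (\<Sum>j\<in>{\<iota><..<c}. (b $$ (\<iota>,j) / d \<iota>) * (r $$ (j,c) / (r $$ (\<iota>,\<iota>) - r $$ (c,c))))"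
          by (simp add: sum_divide_distrib times_divide_times_eq)
        finally show ?thesis .
      qed
      finally show ?thesis unfolding e_def y_def .
    qed
    have Y: "y \<gamma> = FF e \<iota> \<gamma>" by (rule FF_unique[OF rec io(3) io(2)])
    have G: "(let ks = sorted_list_of_set S in
                      r $$ (\<iota>, ks ! 0) * r $$ (ks ! (v - 1), \<gamma>)
                        / ((r $$ (\<iota>,\<iota>) - r $$ (ks ! 0, ks ! 0)) * (r $$ (\<iota>,\<iota>) - r $$ (\<gamma>,\<gamma>)))
                      * (\<Prod>u = 1..v - 1. r $$ (ks ! (u - 1), ks ! u)
                            / (r $$ (\<iota>,\<iota>) - r $$ (ks ! u, ks ! u))))
          = ep e \<iota> (sorted_list_of_set S) \<gamma>"
      if vS: "v \<ge> 1" "S \<subseteq> {\<iota><..<\<gamma>}" "card S = v" for v S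
    proof -
      define ks where "ks = sorted_list_of_set S"
      have fS: "finite S" using vS finite_subset by blast
      have lk: "length ks = v" unfolding ks_def using vS fS by simp
      have ne: "ks \<noteq> []" using lk vS by auto
      have "(let ks = sorted_list_of_set S in
                      r $$ (\<iota>, ks ! 0) * r $$ (ks ! (v - 1), \<gamma>)
                        / ((r $$ (\<iota>,\<iota>) - r $$ (ks ! 0, ks ! 0)) * (r $$ (\<iota>,\<iota>) - r $$ (\<gamma>,\<gamma>)))
                      * (\<Prod>u = 1..v - 1. r $$ (ks ! (u - 1), ks ! u)
                            / (r $$ (\<iota>,\<iota>) - r $$ (ks ! u, ks ! u))))
          = e \<iota> (ks!0) * e (ks!(length ks - 1)) \<gamma> * (\<Prod>u=1..length ks - 1. e (ks!(u-1)) (ks!u))"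
        unfolding ks_def[symmetric] Let_def lk e_def by (simp add: times_divide_times_eq)
      also have "\<dots> = ep e \<iota> ks \<gamma>" by (rule ep_idx[OF ne])
      finally show ?thesis unfolding ks_def .
    qed
    have "r $$ (\<iota>,\<gamma>) / (r $$ (\<iota>,\<iota>) - r $$ (\<gamma>,\<gamma>))
             + (\<Sum>v = 1..\<gamma> - \<iota> - 1.
                  \<Sum>S \<in> {S. S \<subseteq> {\<iota><..<\<gamma>} \<and> card S = v}.
                    (let ks = sorted_list_of_set S in
                      r $$ (\<iota>, ks ! 0) * r $$ (ks ! (v - 1), \<gamma>)
                        / ((r $$ (\<iota>,\<iota>) - r $$ (ks ! 0, ks ! 0)) * (r $$ (\<iota>,\<iota>) - r $$ (\<gamma>,\<gamma>)))
                      * (\<Prod>u = 1..v - 1. r $$ (ks ! (u - 1), ks ! u)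
                            / (r $$ (\<iota>,\<iota>) - r $$ (ks ! u, ks ! u)))))
          = FF e \<iota> \<gamma>"
      using FF_card[where e=e and a=\<iota> and c=\<gamma>, OF G] unfolding e_def by simp
    then show ?thesis using Y dn unfolding y_def by (simp add: field_simps)
  qed
  show ?thesis using B ub inv db conj binv low formula by blast
qed

end
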